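(* Let $\vec x$ be an optimal solution of the LP $\max\{\vec w\cdot\vec x:\sum_j u_{i,j}x_j\le b_i\ \forall i,\ \vec x\in[0,1]^n\}$ and run the algorithm $\textsc{SKSP}(\alpha_1,\beta_1,\alpha_2)$ described in the context. Then for every item $j$, the event $\mathrm{ad}_{2,j}$ that $j$ is added in the second chance satisfies $\Pr[\mathrm{ad}_{2,j}]\ge\frac{x_j}{k}\alpha_2\left(1-\frac{\alpha_1x_j}{k}-\beta_1-\frac{\alpha_2}{2}\right)$.
   Context: Stochastic $k$-set packing: $n$ items; item $j$ has random weight $W_j\ge0$ and random size vector $S_j\in\{0,1\}^m$, the pairs $(W_j,S_j)$ mutually independent across $j$; $u_{i,j}=\mathbb E[S_{i,j}]$, $w_j=\mathbb E[W_j]$; $S_{i,j}=0$ a.s. outside a known set $\mathcal C(j)$ with $|\mathcal C(j)|\le k$; capacities $\vec b\in\mathbb Z_+^m$. An item $j$ is safe if every $i\in\mathcal C(j)$ has at least one unit of remaining capacity; a probed item is irrevocably added and its realization observed. Algorithm $\textsc{SKSP}(\alpha_1,\beta_1,\alpha_2)$ with $\alpha_1,\alpha_2\ge0$ and $0\le\beta_1\le\alpha_1(1-\alpha_1/2)$: First chance: generate independent Bernoulli $Y_{1,j}$ with mean $\alpha_1x_j/k$, follow a uniformly random order over $[n]$ and add $j$ iff $Y_{1,j}=1$ and $j$ is safe, where (by simulation-based attenuation, i.e. adding with a suitable extra probability) each item is added in this first chance with probability exactly $\beta_1x_j/k$. Second chance: generate independent Bernoulli $Y_{2,j}$ with mean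 $\alpha_2x_j/k$, follow an independent uniformly random order over $[n]$ and add $j$ iff $j$ is safe, $Y_{1,j}=0$ and $Y_{2,j}=1$. *)

theory Defs
  imports "HOL-Probability.Probability" "HOL-Combinatorics.Multiset_Permutations"
begin

text \<open>Items are 0..<n, resources are 0..<m. The random size vector S_j of item j is
  represented by the random set of resources i with S_{i,j} = 1; its law is the pmf D j.\<close>

definition mean_size :: "(nat \<Rightarrow> nat set pmf) \<Rightarrow> nat \<Rightarrow> nat \<Rightarrow> real" where
  "mean_size D i j = measure_pmf.prob (D j) {A. i \<in> A}"

definition lp_feasible ::
  "nat \<Rightarrow> nat \<Rightarrow> (nat \<Rightarrow> nat set pmf) \<Rightarrow> (nat \<Rightarrow> nat) \<Rightarrow> (nat \<Rightarrow> real) \<Rightarrow> bool" where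
  "lp_feasible n m D b y \<longleftrightarrow>
     (\<forall>j<n. 0 \<le> y j \<and> y j \<le> 1) \<and>
     (\<forall>i<m. (\<Sum>j<n. mean_size D i j * y j) \<le> real (b i))"

definition lp_optimal ::
  "nat \<Rightarrow> nat \<Rightarrow> (nat \<Rightarrow> nat set pmf) \<Rightarrow> (nat \<Rightarrow> nat) \<Rightarrow> (nat \<Rightarrow> real) \<Rightarrow> (nat \<Rightarrow> real) \<Rightarrow> bool" where
  "lp_optimal n m D b w x \<longleftrightarrow> lp_feasible n m D b x \<and>
     (\<forall>y. lp_feasible n m D b y \<longrightarrow> (\<Sum>j<n. w j * y j) \<le> (\<Sum>j<n. w j * x j))"

text \<open>used i = number of units of resource i consumed so far; j is safe iff every
  resource in C j still has at least one unit of remaining capacity.\<close>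
definition safe :: "(nat \<Rightarrow> nat set) \<Rightarrow> (nat \<Rightarrow> nat) \<Rightarrow> (nat \<Rightarrow> nat) \<Rightarrow> nat \<Rightarrow> bool" where
  "safe C b used j \<longleftrightarrow> (\<forall>i\<in>C j. used i < b i)"

text \<open>The state is (resource usage, set of items added in this pass).\<close>
fun pass :: "(nat \<Rightarrow> bool) \<Rightarrow> (nat \<Rightarrow> nat set) \<Rightarrow> (nat \<Rightarrow> nat) \<Rightarrow> (nat \<Rightarrow> nat set)
    \<Rightarrow> nat list \<Rightarrow> (nat \<Rightarrow> nat) \<times> nat set \<Rightarrow> (nat \<Rightarrow> nat) \<times> nat set" where
  "pass want C b S [] st = st"
| "pass want C b S (j # js) (used, A) =
     (if want j \<and> safe C b used j
      then pass want C b S js (\<lambda>i. used i + (if i \<in> S j then 1 else 0), insert j A)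
      else pass want C b S js (used, A))"

text \<open>The attenuation is realised by
  independent coins Z j with mean gam j: in the first chance j is added iff
  Y1 j, Z j and j is safe. The result is the pair (items added in the first chance,
  items added in the second chance).\<close>
definition sksp :: "nat \<Rightarrow> nat \<Rightarrow> (nat \<Rightarrow> nat set) \<Rightarrow> (nat \<Rightarrow> nat) \<Rightarrow> (nat \<Rightarrow> nat set pmf)
    \<Rightarrow> (nat \<Rightarrow> real) \<Rightarrow> real \<Rightarrow> real \<Rightarrow> (nat \<Rightarrow> real) \<Rightarrow> (nat set \<times> nat set) pmf" where
  "sksp n k C b D x \<alpha>1 \<alpha>2 gam = do {
     S \<leftarrow> Pi_pmf {..<n} {} D;
     Y1 \<leftarrow> Pi_pmf {..<n} False (\<lambda>j. bernoulli_pmf (\<alpha>1 * x j / real k));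
     Z \<leftarrow> Pi_pmf {..<n} False (\<lambda>j. bernoulli_pmf (gam j));
     \<sigma>1 \<leftarrow> pmf_of_set (permutations_of_set {..<n});
     Y2 \<leftarrow> Pi_pmf {..<n} False (\<lambda>j. bernoulli_pmf (\<alpha>2 * x j / real k));
     \<sigma>2 \<leftarrow> pmf_of_set (permutations_of_set {..<n});
     let st1 = pass (\<lambda>j. Y1 j \<and> Z j) C b S \<sigma>1 (\<lambda>_. 0, {});
     let st2 = pass (\<lambda>j. \<not> Y1 j \<and> Y2 j) C b S \<sigma>2 (fst st1, {});
     return_pmf (snd st1, snd st2)
   }"

end

theory Submission
  imports Defs "HOL-Combinatorics.Transposition"
begin


lemma prob_cong_set:
  assumes "\<And>x. x \<in> set_pmf p \<Longrightarrow> x \<in> A \<longleftrightarrow> x \<in> B"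
  shows "measure_pmf.prob p A = measure_pmf.prob p B"
  using assms by (intro measure_prob_cong_0) (auto simp: set_pmf_iff)

lemma prob_bind_pmf:
  "measure_pmf.prob (bind_pmf M f) X = (\<integral>x. measure_pmf.prob (f x) X \<partial>M)"
proof -
  have "emeasure (bind_pmf M f) X = (\<integral>\<^sup>+x. emeasure (f x) X \<partial>M)" by simp
  also have "\<dots> = (\<integral>\<^sup>+x. ennreal (measure_pmf.prob (f x) X) \<partial>M)"
    by (simp add: measure_pmf.emeasure_eq_measure)
  also have "\<dots> = ennreal (\<integral>x. measure_pmf.prob (f x) X \<partial>M)"
    by (intro nn_integral_eq_integral measure_pmf.integrable_const_bound[where B=1]) auto
  finally show ?thesis
    by (simp add: measure_pmf.emeasure_eq_measure)
qed

lemma prob_pair_pmf: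
  "measure_pmf.prob (pair_pmf A B) E = (\<integral>a. measure_pmf.prob B {b. (a,b) \<in> E} \<partial>A)"
proof -
  have "\<And>a. bind_pmf B (\<lambda>b. return_pmf (a,b)) = map_pmf (Pair a) B" by (simp add: map_pmf_def)
  have "pair_pmf A B = bind_pmf A (\<lambda>a. map_pmf (Pair a) B)" unfolding pair_pmf_def map_pmf_def by simp
  then show ?thesis by (simp only: prob_bind_pmf measure_map_pmf) (simp add: vimage_def)
qed

lemma prob_pair_rect:
  "measure_pmf.prob (pair_pmf A B) {(a,b). P a \<and> Q b} = measure_pmf.prob A {a. P a} * measure_pmf.prob B {b. Q b}"
proof -
  have "measure_pmf.prob (pair_pmf A B) {(a,b). P a \<and> Q b}
      = (\<integral>a. indicator {a. P a} a * measure_pmf.prob B {b. Q b} \<partial>A)"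
    unfolding prob_pair_pmf by (intro Bochner_Integration.integral_cong) (auto simp: indicator_def)
  also have "\<dots> = measure_pmf.prob A {a. P a} * measure_pmf.prob B {b. Q b}"
    by simp
  finally show ?thesis .
qed

lemma pair_lin:
  assumes "\<And>a. a \<in> set_pmf A \<Longrightarrow> measure_pmf.prob B {b. (a,b) \<in> E} = c * measure_pmf.prob B {b. (a,b) \<in> E'}"
  shows "measure_pmf.prob (pair_pmf A B) E = c * measure_pmf.prob (pair_pmf A B) E'"
proof -
  have "measure_pmf.prob (pair_pmf A B) E = (\<integral>a. c * measure_pmf.prob B {b. (a,b) \<in> E'} \<partial>A)"
    unfolding prob_pair_pmf by (intro integral_cong_AE) (auto simp: AE_measure_pmf_iff assms)
  then show ?thesis unfolding prob_pair_pmf[of A B E'] by simp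
qed

lemma pair_const:
  assumes "\<And>a. a \<in> set_pmf A \<Longrightarrow> measure_pmf.prob B {b. (a,b) \<in> E} = c"
  shows "measure_pmf.prob (pair_pmf A B) E = c"
proof -
  have "measure_pmf.prob (pair_pmf A B) E = (\<integral>a. c \<partial>A)"
    unfolding prob_pair_pmf by (intro integral_cong_AE) (auto simp: AE_measure_pmf_iff assms)
  then show ?thesis by simp
qed

lemma Pi_indep:
  fixes R :: "'r pmf"
  assumes fin: "finite I" and jI: "j \<in> I"
    and ign: "\<And>g y r. r \<in> set_pmf R \<Longrightarrow> Q (g(j:=y)) r = Q g r"
  shows "measure_pmf.prob (pair_pmf (Pi_pmf I d D) R) {(g,r). P (g j) \<and> Q g r}
       = measure_pmf.prob (D j) {y. P y} * measure_pmf.prob (pair_pmf (Pi_pmf I d D) R) {(g,r). Q g r}"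
proof -
  define W where "W = pair_pmf (Pi_pmf (I - {j}) d D) R"
  have PI: "Pi_pmf I d D = map_pmf (\<lambda>(y,f). f(j:=y)) (pair_pmf (D j) (Pi_pmf (I-{j}) d D))"
    using Pi_pmf_insert[of "I-{j}" j d D] fin jI by (simp add: insert_absorb)
  have key: "measure_pmf.prob (pair_pmf (Pi_pmf I d D) R) E'
      = measure_pmf.prob (pair_pmf (D j) W) {(y,f,r). (f(j:=y), r) \<in> E'}" for E'
    unfolding PI pair_map_pmf1 pair_pair_pmf W_def
    by (simp add: vimage_def case_prod_unfold apfst_def map_prod_def)
  have sR: "set_pmf W \<subseteq> UNIV \<times> set_pmf R" unfolding W_def by auto
  have 1: "measure_pmf.prob (pair_pmf (D j) W) {(y,f,r). (f(j:=y), r) \<in> {(g,r). P (g j) \<and> Q g r}}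
     = measure_pmf.prob (pair_pmf (D j) W) {(y,w). P y \<and> (\<lambda>(f,r). Q f r) w}"
    using sR by (intro prob_cong_set) (auto simp: ign)
  have 2: "measure_pmf.prob (pair_pmf (D j) W) {(y,f,r). (f(j:=y), r) \<in> {(g,r). Q g r}}
     = measure_pmf.prob (pair_pmf (D j) W) {(y,w). True \<and> (\<lambda>(f,r). Q f r) w}"
    using sR by (intro prob_cong_set) (auto simp: ign)
  show ?thesis unfolding key 1 2 prob_pair_rect by simp
qed

lemma pass_append:
  "pass want C b S (xs @ ys) st = pass want C b S ys (pass want C b S xs st)"
  by (induction xs arbitrary: st) (auto split: prod.splits)

lemma pass_mono:
  "j \<in> A \<Longrightarrow> j \<in> snd (pass want C b S js (u, A))"
  by (induction js arbitrary: u A) auto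

lemma pass_sub:
  "snd (pass want C b S js (u, A)) \<subseteq> A \<union> {x \<in> set js. want x}"
proof (induction js arbitrary: u A)
  case Nil
  then show ?case by simp
next
  case (Cons a js)
  have 1: "snd (pass want C b S js (u', insert a A)) \<subseteq> insert a A \<union> {x \<in> set js. want x}" for u'
    by (rule Cons.IH)
  have 2: "snd (pass want C b S js (u, A)) \<subseteq> A \<union> {x \<in> set js. want x}"
    by (rule Cons.IH)
  show ?case using 1 2 by auto
qed

lemma pass_want_cong:
  "(\<And>x. x \<in> set js \<Longrightarrow> want x = want' x) \<Longrightarrow> pass want C b S js st = pass want' C b S js st"
  by (induction js arbitrary: st) (auto split: prod.splits)

lemma pass_use:
  "distinct js \<Longrightarrow> set js \<inter> A = {} \<Longrightarrow>
   fst (pass want C b S js (u, A)) i = u i + card {x \<in> snd (pass want C b S js (u, A)) - A. i \<in> S x}"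
proof (induction js arbitrary: u A)
  case Nil
  then show ?case by simp
next
  case (Cons j js)
  show ?case
  proof (cases "want j \<and> safe C b u j")
    case True
    define A' where "A' = snd (pass want C b S js (\<lambda>i. u i + (if i \<in> S j then 1 else 0), insert j A))"
    have IH: "fst (pass want C b S js (\<lambda>i. u i + (if i \<in> S j then 1 else 0), insert j A)) i
        = u i + (if i \<in> S j then 1 else 0) + card {x \<in> A' - insert j A. i \<in> S x}"
      using Cons.IH[of "insert j A" "\<lambda>i. u i + (if i \<in> S j then 1 else 0)"] Cons.prems
      by (auto simp: A'_def)
    have jA': "j \<in> A'" unfolding A'_def by (rule pass_mono) simp
    have "A' - A \<subseteq> insert j (set js)"
      using pass_sub[of want C b S js _ "insert j A"] unfolding A'_def by auto
    then have finA': "finite (A' - A)" by (rule finite_subset) simp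
    have jA: "j \<notin> A" using Cons.prems by auto
    have eq: "{x \<in> A' - A. i \<in> S x} = (if i \<in> S j then insert j {x \<in> A' - insert j A. i \<in> S x} else {x \<in> A' - insert j A. i \<in> S x})"
      using jA' jA by auto
    have "card {x \<in> A' - A. i \<in> S x} = (if i \<in> S j then 1 else 0) + card {x \<in> A' - insert j A. i \<in> S x}"
    proof -
      have "finite {x \<in> A' - insert j A. i \<in> S x}" using finA' by (rule finite_subset[rotated]) auto
      then show ?thesis unfolding eq by (simp add: card_insert_if)
    qed
    then show ?thesis using True IH by (simp add: A'_def)
  next
    case False
    then show ?thesis using Cons by auto
  qed
qed

lemma pass_notin:
  "j' \<notin> set js \<Longrightarrow> j' \<notin> A \<Longrightarrow> j' \<notin> snd (pass want C b S js (u, A))"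
  using pass_sub[of want C b S js u A] by auto

lemma pass_ign:
  "distinct js \<Longrightarrow> j' \<notin> A \<Longrightarrow>
   (j' \<in> snd (pass want C b S js (u, A))) = (j' \<in> snd (pass want C b (S(j':=y)) js (u, A)))"
proof (induction js arbitrary: u A)
  case Nil
  then show ?case by simp
next
  case (Cons x js)
  show ?case
  proof (cases "x = j'")
    case True
    then show ?thesis using Cons.prems
      by (auto simp: pass_mono pass_notin)
  next
    case False
    then show ?thesis using Cons.prems Cons.IH by auto
  qed
qed



lemma tw_h2: "a = x \<Longrightarrow> j \<notin> set (takeWhile (\<lambda>y. y \<noteq> x) (a#xs))" by simp
lemma tw_h4: "a \<noteq> j \<Longrightarrow> a \<noteq> x \<Longrightarrow> j \<notin> set (takeWhile (\<lambda>y. y \<noteq> x) xs) \<Longrightarrow> j \<notin> set (takeWhile (\<lambda>y. y \<noteq> x) (a#xs))" by simp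
lemma tw_h1: "a = j \<Longrightarrow> x \<in> set (takeWhile (\<lambda>y. y \<noteq> j) (a#xs)) \<Longrightarrow> False" by simp
lemma tw_h3: "a \<noteq> j \<Longrightarrow> a \<noteq> x \<Longrightarrow> x \<in> set (takeWhile (\<lambda>y. y \<noteq> j) (a#xs)) \<Longrightarrow> x \<in> set (takeWhile (\<lambda>y. y \<noteq> j) xs)" by simp
lemma takeWhile_disj:
  "x \<in> set (takeWhile (\<lambda>y. y \<noteq> j) xs) \<Longrightarrow> j \<notin> set (takeWhile (\<lambda>y. y \<noteq> x) xs)"
  apply (induct xs)
   apply simp
  by (metis tw_h1 tw_h2 tw_h3 tw_h4)

lemma takeWhile_transpose:
  fixes \<sigma> :: "nat list" and x j :: nat
  defines "\<tau> \<equiv> Transposition.transpose x j"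
  shows "(x \<in> set (takeWhile (\<lambda>y. y \<noteq> j) (map \<tau> \<sigma>))) = (j \<in> set (takeWhile (\<lambda>y. y \<noteq> x) \<sigma>))"
proof -
  have "takeWhile (\<lambda>y. y \<noteq> j) (map \<tau> \<sigma>) = map \<tau> (takeWhile (\<lambda>y. y \<noteq> x) \<sigma>)"
    by (induction \<sigma>) (auto simp: \<tau>_def transpose_eq_iff)
  moreover have h: "\<And>y. (x = \<tau> y) = (y = j)" by (auto simp: \<tau>_def Transposition.transpose_def)
  ultimately show ?thesis by (simp add: image_iff h)
qed

lemma before_half:
  fixes n j x :: nat
  assumes "j < n" "x < n"
  shows "measure_pmf.prob (pmf_of_set (permutations_of_set {..<n})) {\<sigma>. x \<in> set (takeWhile (\<lambda>y. y \<noteq> j) \<sigma>)} \<le> 1/2"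
proof (cases "x = j")
  case True
  have "{\<sigma>. x \<in> set (takeWhile (\<lambda>y. y \<noteq> j) \<sigma>)} = {}" using True by (auto dest: set_takeWhileD)
  then show ?thesis by simp
next
  case False
  define P where "P = permutations_of_set {..<n::nat}"
  define \<tau> where "\<tau> = Transposition.transpose x j"
  define B1 where "B1 = {\<sigma>. x \<in> set (takeWhile (\<lambda>y. y \<noteq> j) \<sigma>)}"
  define B2 where "B2 = {\<sigma>. j \<in> set (takeWhile (\<lambda>y. y \<noteq> x) \<sigma>)}"
  have fin: "finite P" "P \<noteq> {}" unfolding P_def by auto
  have inj: "inj_on (map \<tau>) P"
  proof -
    have "inj (map \<tau>)" unfolding \<tau>_def by (intro inj_mapI inj_transpose)
    then show ?thesis by (rule inj_on_subset) simp
  qed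
  have timg: "\<tau> ` {..<n} = {..<n}" using assms unfolding \<tau>_def by simp
  have perm: "map \<tau> \<sigma> \<in> P" if "\<sigma> \<in> P" for \<sigma>
  proof -
    have "set \<sigma> = {..<n}" "distinct \<sigma>" using that unfolding P_def by (auto dest: permutations_of_setD)
    then show ?thesis unfolding P_def using timg
      by (intro permutations_of_setI) (auto simp: distinct_map \<tau>_def)
  qed
  have img: "map \<tau> ` P = P"
  proof
    show "map \<tau> ` P \<subseteq> P"
    proof
      fix s assume "s \<in> map \<tau> ` P"
      then obtain \<sigma> where "\<sigma> \<in> P" "s = map \<tau> \<sigma>" by blast
      then show "s \<in> P" using perm by simp
    qed
    show "P \<subseteq> map \<tau> ` P"
    proof
      fix \<sigma> assume "\<sigma> \<in> P"
      moreover have "\<sigma> = map \<tau> (map \<tau> \<sigma>)" by (simp add: \<tau>_def)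
      moreover have "map \<tau> \<sigma> \<in> P" using \<open>\<sigma> \<in> P\<close> perm by simp
      ultimately show "\<sigma> \<in> map \<tau> ` P" by blast
    qed
  qed
  have mp: "map_pmf (map \<tau>) (pmf_of_set P) = pmf_of_set P"
    using map_pmf_of_set_inj[OF inj fin(2,1)] img by simp
  have pre: "map \<tau> -` B1 = B2"
    unfolding B1_def B2_def \<tau>_def using takeWhile_transpose by auto
  have eq: "measure_pmf.prob (pmf_of_set P) B1 = measure_pmf.prob (pmf_of_set P) B2"
  proof -
    have "measure_pmf.prob (pmf_of_set P) B1 = measure_pmf.prob (map_pmf (map \<tau>) (pmf_of_set P)) B1"
      by (simp add: mp)
    also have "\<dots> = measure_pmf.prob (pmf_of_set P) B2" by (simp add: pre)
    finally show ?thesis .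
  qed
  have disj: "B1 \<inter> B2 = {}"
  proof -
    have False if "\<sigma> \<in> B1" "\<sigma> \<in> B2" for \<sigma>
      using takeWhile_disj[of x j \<sigma>] that unfolding B1_def B2_def mem_Collect_eq by blast
    then show ?thesis by blast
  qed
  have "measure_pmf.prob (pmf_of_set P) B1 + measure_pmf.prob (pmf_of_set P) B2
        = measure_pmf.prob (pmf_of_set P) (B1 \<union> B2)"
    using disj by (simp add: measure_pmf.finite_measure_Union)
  also have "\<dots> \<le> 1" by simp
  finally show ?thesis using eq unfolding B1_def P_def by simp
qed



lemma prob_mono_set:
  assumes "\<And>x. x \<in> set_pmf p \<Longrightarrow> x \<in> A \<Longrightarrow> x \<in> B"
  shows "measure_pmf.prob p A \<le> measure_pmf.prob p B"
proof -
  have "measure_pmf.prob p A = measure_pmf.prob p (A \<inter> set_pmf p)"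
    by (intro prob_cong_set) auto
  also have "\<dots> \<le> measure_pmf.prob p B"
    using assms by (intro measure_pmf.finite_measure_mono) auto
  finally show ?thesis .
qed

lemma prob_Pi_comp:
  assumes "finite I" "i \<in> I"
  shows "measure_pmf.prob (Pi_pmf I d D) {g. P (g i)} = measure_pmf.prob (D i) {y. P y}"
proof -
  have "measure_pmf.prob (Pi_pmf I d D) {g. P (g i)} = measure_pmf.prob (map_pmf (\<lambda>g. g i) (Pi_pmf I d D)) {y. P y}"
    by (simp add: vimage_def)
  also have "map_pmf (\<lambda>g. g i) (Pi_pmf I d D) = D i" using assms by (simp add: Pi_pmf_component)
  finally show ?thesis .
qed

lemma Pi_indep':
  fixes R :: "'r pmf"
  assumes fin: "finite I" and jI: "j \<in> I"
    and ign: "\<And>g y r. r \<in> set_pmf R \<Longrightarrow> Q (g(j:=y)) r = Q g r"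
    and E: "\<And>g r. (g,r) \<in> E \<longleftrightarrow> P (g j) \<and> Q g r"
    and E': "\<And>g r. (g,r) \<in> E' \<longleftrightarrow> Q g r"
  shows "measure_pmf.prob (pair_pmf (Pi_pmf I d D) R) E
       = measure_pmf.prob (D j) {y. P y} * measure_pmf.prob (pair_pmf (Pi_pmf I d D) R) E'"
proof -
  have "E = {(g,r). P (g j) \<and> Q g r}" "E' = {(g,r). Q g r}" using E E' by auto
  then show ?thesis using Pi_indep[where Q=Q and P=P and d=d and D=D and R=R, OF fin jI ign] by simp
qed

lemma peel4_lin:
  assumes "\<And>a1 a2 a3 a4. measure_pmf.prob X {w. (a1,a2,a3,a4,w) \<in> E} = c * measure_pmf.prob X {w. (a1,a2,a3,a4,w) \<in> E'}"
  shows "measure_pmf.prob (pair_pmf A1 (pair_pmf A2 (pair_pmf A3 (pair_pmf A4 X)))) E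
       = c * measure_pmf.prob (pair_pmf A1 (pair_pmf A2 (pair_pmf A3 (pair_pmf A4 X)))) E'"
  by (intro pair_lin) (simp add: assms)

lemma peel4_const:
  assumes "\<And>a1 a2 a3 a4. measure_pmf.prob X {w. (a1,a2,a3,a4,w) \<in> E} = c"
  shows "measure_pmf.prob (pair_pmf A1 (pair_pmf A2 (pair_pmf A3 (pair_pmf A4 X)))) E = c"
  by (intro pair_const) (simp add: assms)

definition omega where
  "omega n k D x \<alpha>1 \<alpha>2 gam =
    pair_pmf (Pi_pmf {..<n} {} D)
   (pair_pmf (Pi_pmf {..<n} False (\<lambda>j. bernoulli_pmf (\<alpha>1 * x j / real k)))
   (pair_pmf (Pi_pmf {..<n} False (\<lambda>j. bernoulli_pmf (gam j)))
   (pair_pmf (pmf_of_set (permutations_of_set {..<n}))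
   (pair_pmf (Pi_pmf {..<n} False (\<lambda>j. bernoulli_pmf (\<alpha>2 * x j / real k)))
             (pmf_of_set (permutations_of_set {..<n}))))))"

definition res :: "(nat \<Rightarrow> nat set) \<Rightarrow> (nat \<Rightarrow> nat) \<Rightarrow>
   (nat \<Rightarrow> nat set) \<times> (nat \<Rightarrow> bool) \<times> (nat \<Rightarrow> bool) \<times> nat list \<times> (nat \<Rightarrow> bool) \<times> nat list \<Rightarrow> nat set \<times> nat set" where
  "res C b = (\<lambda>(S,Y1,Z,\<sigma>1,Y2,\<sigma>2).
     let st1 = pass (\<lambda>j. Y1 j \<and> Z j) C b S \<sigma>1 (\<lambda>_. 0, {});
         st2 = pass (\<lambda>j. \<not> Y1 j \<and> Y2 j) C b S \<sigma>2 (fst st1, {})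
     in (snd st1, snd st2))"

lemma sksp_eq: "sksp n k C b D x \<alpha>1 \<alpha>2 gam = map_pmf (res C b) (omega n k D x \<alpha>1 \<alpha>2 gam)"
  unfolding sksp_def omega_def res_def pair_pmf_def
  by (simp add: map_bind_pmf bind_assoc_pmf bind_return_pmf Let_def)




lemma card_filter_sum:
  "finite A \<Longrightarrow> real (card {y\<in>A. P y}) = (\<Sum>y\<in>A. if P y then 1 else 0)"
  by (simp add: sum.If_cases Int_def conj_commute)

lemma pass_second:
  assumes "j \<in> set \<sigma>" "want j" "safe C b (fst (pass want C b S (takeWhile (\<lambda>y. y \<noteq> j) \<sigma>) (u, A))) j"
  shows "j \<in> snd (pass want C b S \<sigma> (u, A))"
proof -
  obtain rest where dw: "dropWhile (\<lambda>y. y \<noteq> j) \<sigma> = j # rest"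
    using assms(1) by (metis (mono_tags, lifting) dropWhile_eq_Nil_conv hd_dropWhile list.collapse)
  have sp: "\<sigma> = takeWhile (\<lambda>y. y \<noteq> j) \<sigma> @ j # rest" using dw takeWhile_dropWhile_id by metis
  obtain u' A' where st: "pass want C b S (takeWhile (\<lambda>y. y \<noteq> j) \<sigma>) (u, A) = (u', A')" by fastforce
  have "j \<in> snd (pass want C b S (j # rest) (u', A'))"
    using assms(2,3) st by (simp add: pass_mono)
  then show ?thesis by (subst sp) (simp add: pass_append st)
qed

theorem lemma4:
  fixes n m k :: nat and C :: "nat \<Rightarrow> nat set" and D :: "nat \<Rightarrow> nat set pmf"
    and b :: "nat \<Rightarrow> nat" and w x gam :: "nat \<Rightarrow> real" and \<alpha>1 \<beta>1 \<alpha>2 :: real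
  assumes k_pos: "k \<ge> 1"
    and C_res: "\<forall>j<n. C j \<subseteq> {..<m} \<and> card (C j) \<le> k"
    and D_supp: "\<forall>j<n. set_pmf (D j) \<subseteq> Pow (C j)"
    and b_pos: "\<forall>i<m. b i \<ge> 1"
    and w_nonneg: "\<forall>j<n. w j \<ge> 0"
    and x_opt: "lp_optimal n m D b w x"
    and \<alpha>1_nonneg: "\<alpha>1 \<ge> 0" and \<alpha>2_nonneg: "\<alpha>2 \<ge> 0"
    and \<beta>1_bounds: "0 \<le> \<beta>1" "\<beta>1 \<le> \<alpha>1 * (1 - \<alpha>1 / 2)"
    and Y1_wd: "\<forall>j<n. \<alpha>1 * x j / real k \<le> 1"
    and Y2_wd: "\<forall>j<n. \<alpha>2 * x j / real k \<le> 1"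
    and gam_range: "\<forall>j<n. 0 \<le> gam j \<and> gam j \<le> 1"
    and attenuation: "\<forall>j<n. measure_pmf.prob (sksp n k C b D x \<alpha>1 \<alpha>2 gam) {r. j \<in> fst r}
                              = \<beta>1 * x j / real k"
    and j: "j < n"
  shows "measure_pmf.prob (sksp n k C b D x \<alpha>1 \<alpha>2 gam) {r. j \<in> snd r}
           \<ge> x j / real k * \<alpha>2 * (1 - \<alpha>1 * x j / real k - \<beta>1 - \<alpha>2 / 2)"
proof -
  define p1 where "p1 = \<alpha>1 * x j / real k"
  define p2 where "p2 = \<alpha>2 * x j / real k"
  define q where "q = \<beta>1 + \<alpha>2 / 2"
  define \<Omega> where "\<Omega> = omega n k D x \<alpha>1 \<alpha>2 gam"
  define PS where "PS = Pi_pmf {..<n} {} D"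
  define PY1 where "PY1 = Pi_pmf {..<n} False (\<lambda>j. bernoulli_pmf (\<alpha>1 * x j / real k))"
  define PZ where "PZ = Pi_pmf {..<n} False (\<lambda>j. bernoulli_pmf (gam j))"
  define PP where "PP = pmf_of_set (permutations_of_set {..<n})"
  define PY2 where "PY2 = Pi_pmf {..<n} False (\<lambda>j. bernoulli_pmf (\<alpha>2 * x j / real k))"
  have \<Omega>_eq: "\<Omega> = pair_pmf PS (pair_pmf PY1 (pair_pmf PZ (pair_pmf PP (pair_pmf PY2 PP))))"
    unfolding \<Omega>_def omega_def PS_def PY1_def PZ_def PP_def PY2_def by simp
  have sk: "sksp n k C b D x \<alpha>1 \<alpha>2 gam = map_pmf (res C b) \<Omega>"
    unfolding \<Omega>_def by (rule sksp_eq)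
  have kpos: "real k > 0" using k_pos by simp
  have feas: "lp_feasible n m D b x" using x_opt unfolding lp_optimal_def by simp
  have x_nn: "0 \<le> x y" "x y \<le> 1" if "y < n" for y
    using feas that unfolding lp_feasible_def by auto
  have LP: "(\<Sum>y<n. mean_size D i y * x y) \<le> real (b i)" if "i < m" for i
    using feas that unfolding lp_feasible_def by auto
  have PP_supp: "set_pmf PP = permutations_of_set {..<n}" unfolding PP_def by simp
  have supp: "\<sigma>1 \<in> permutations_of_set {..<n}" "\<sigma>2 \<in> permutations_of_set {..<n}"
    if "(S,Y1,Z,\<sigma>1,Y2,\<sigma>2) \<in> set_pmf \<Omega>" for S Y1 Z \<sigma>1 Y2 \<sigma>2
    using that unfolding \<Omega>_eq by (auto simp: PP_supp)
  define up where "up S Y1 Z \<sigma>1 Y2 \<sigma>2 = fst (pass (\<lambda>y. \<not> Y1 y \<and> Y2 y) C b S (takeWhile (\<lambda>y. y \<noteq> j) \<sigma>2)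
      (fst (pass (\<lambda>y. Y1 y \<and> Z y) C b S \<sigma>1 (\<lambda>_. 0, {})), {}))" for S Y1 Z \<sigma>1 Y2 \<sigma>2
  define G where "G = {(S,Y1,Z,\<sigma>1,Y2,\<sigma>2). \<not> Y1 j \<and> (\<forall>i\<in>C j. up S Y1 Z \<sigma>1 Y2 \<sigma>2 i < b i)}"

  have p2nn: "p2 \<ge> 0" unfolding p2_def using \<alpha>2_nonneg x_nn[OF j] kpos by simp
  have s1: "measure_pmf.prob \<Omega> {(S,Y1,Z,\<sigma>1,Y2,\<sigma>2). Y2 j \<and> (S,Y1,Z,\<sigma>1,Y2,\<sigma>2) \<in> G}
      \<le> measure_pmf.prob (sksp n k C b D x \<alpha>1 \<alpha>2 gam) {r. j \<in> snd r}"
  proof -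
    have "measure_pmf.prob \<Omega> {(S,Y1,Z,\<sigma>1,Y2,\<sigma>2). Y2 j \<and> (S,Y1,Z,\<sigma>1,Y2,\<sigma>2) \<in> G}
      \<le> measure_pmf.prob \<Omega> (res C b -` {r. j \<in> snd r})"
    proof (rule prob_mono_set)
      fix \<omega> assume om: "\<omega> \<in> set_pmf \<Omega>" "\<omega> \<in> {(S,Y1,Z,\<sigma>1,Y2,\<sigma>2). Y2 j \<and> (S,Y1,Z,\<sigma>1,Y2,\<sigma>2) \<in> G}"
      obtain S Y1 Z \<sigma>1 Y2 \<sigma>2 where \<omega>: "\<omega> = (S,Y1,Z,\<sigma>1,Y2,\<sigma>2)" by (cases \<omega>) auto
      have jin: "j \<in> set \<sigma>2" using supp(2)[of S Y1 Z \<sigma>1 Y2 \<sigma>2] om(1) j unfolding \<omega>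
        by (auto dest: permutations_of_setD)
      have h: "Y2 j" "\<not> Y1 j" "\<forall>i\<in>C j. up S Y1 Z \<sigma>1 Y2 \<sigma>2 i < b i"
        using om(2) unfolding \<omega> G_def by auto
      have "j \<in> snd (pass (\<lambda>y. \<not> Y1 y \<and> Y2 y) C b S \<sigma>2 (fst (pass (\<lambda>y. Y1 y \<and> Z y) C b S \<sigma>1 (\<lambda>_. 0, {})), {}))"
        using h jin by (intro pass_second) (auto simp: safe_def up_def)
      then show "\<omega> \<in> res C b -` {r. j \<in> snd r}" unfolding \<omega> res_def by (simp add: Let_def)
    qed
    then show ?thesis unfolding sk by simp
  qed
  have s2: "measure_pmf.prob \<Omega> {(S,Y1,Z,\<sigma>1,Y2,\<sigma>2). Y2 j \<and> (S,Y1,Z,\<sigma>1,Y2,\<sigma>2) \<in> G}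
      = p2 * measure_pmf.prob \<Omega> G"
  proof -
    have ign: "up S Y1 Z \<sigma>1 (Y2(j:=yy)) \<sigma>2 = up S Y1 Z \<sigma>1 Y2 \<sigma>2" for S Y1 Z \<sigma>1 Y2 \<sigma>2 yy
      unfolding up_def by (subst pass_want_cong[where want'="\<lambda>y. \<not> Y1 y \<and> Y2 y"]) (auto dest: set_takeWhileD)
    have p2b: "measure_pmf.prob (bernoulli_pmf p2) {y. y} = p2"
    proof -
      have "{y::bool. y} = {True}" by auto
      then show ?thesis using p2nn Y2_wd j unfolding p2_def by (simp add: measure_pmf_single)
    qed
    show ?thesis unfolding \<Omega>_eq
    proof (rule peel4_lin)
      fix a1 a2 a3 a4
      show "measure_pmf.prob (pair_pmf PY2 PP) {w. (a1, a2, a3, a4, w) \<in> {(S,Y1,Z,\<sigma>1,Y2,\<sigma>2). Y2 j \<and> (S,Y1,Z,\<sigma>1,Y2,\<sigma>2) \<in> G}} =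
          p2 * measure_pmf.prob (pair_pmf PY2 PP) {w. (a1, a2, a3, a4, w) \<in> G}"
      proof -
        have "measure_pmf.prob (pair_pmf PY2 PP) {w. (a1, a2, a3, a4, w) \<in> {(S,Y1,Z,\<sigma>1,Y2,\<sigma>2). Y2 j \<and> (S,Y1,Z,\<sigma>1,Y2,\<sigma>2) \<in> G}} =
          measure_pmf.prob (bernoulli_pmf (\<alpha>2 * x j / real k)) {y. y} * measure_pmf.prob (pair_pmf PY2 PP) {w. (a1, a2, a3, a4, w) \<in> G}"
          unfolding PY2_def
          by (rule Pi_indep'[where P="\<lambda>y. y" and Q="\<lambda>g r. (a1,a2,a3,a4,g,r) \<in> G"])
             (auto simp: j G_def ign)
        then show ?thesis using p2b unfolding p2_def by simp
      qed
    qed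
  qed
  have s3: "measure_pmf.prob \<Omega> G \<ge> 1 - p1 - q"
  proof -
    define EA where "EA = {(S::nat\<Rightarrow>nat set,Y1::nat\<Rightarrow>bool,Z::nat\<Rightarrow>bool,\<sigma>1::nat list,Y2::nat\<Rightarrow>bool,\<sigma>2::nat list). Y1 j}"
    define EB where "EB = {(S,Y1,Z,\<sigma>1,Y2,\<sigma>2). \<exists>i\<in>C j. b i \<le> up S Y1 Z \<sigma>1 Y2 \<sigma>2 i}"
    have p1b: "measure_pmf.prob (bernoulli_pmf p1) {y. y} = p1"
    proof -
      have "{y::bool. y} = {True}" by auto
      moreover have "p1 \<ge> 0" unfolding p1_def using \<alpha>1_nonneg x_nn[OF j] kpos by simp
      ultimately show ?thesis using Y1_wd j unfolding p1_def by (simp add: measure_pmf_single)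
    qed
    have PA: "measure_pmf.prob \<Omega> EA = p1"
      unfolding \<Omega>_eq
    proof (rule pair_const)
      fix a assume "a \<in> set_pmf PS"
      have "{b. (a, b) \<in> EA} = {(g,r). g j \<and> True}" unfolding EA_def by auto
      then show "measure_pmf.prob (pair_pmf PY1 (pair_pmf PZ (pair_pmf PP (pair_pmf PY2 PP)))) {b. (a, b) \<in> EA} = p1"
        using p1b j prob_Pi_comp[of "{..<n}" j False "\<lambda>j. bernoulli_pmf (\<alpha>1 * x j / real k)" "\<lambda>y. y"]
        unfolding PY1_def p1_def by (simp only: prob_pair_rect) simp
    qed
    have qnn: "q \<ge> 0" unfolding q_def using \<beta>1_bounds \<alpha>2_nonneg by simp
    have finC: "finite (C j)" and cardC: "card (C j) \<le> k" and Cm: "C j \<subseteq> {..<m}"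
      using C_res j by (auto intro: finite_subset)
    define EBi where "EBi i = {(S,Y1,Z,\<sigma>1,Y2,\<sigma>2). b i \<le> up S Y1 Z \<sigma>1 Y2 \<sigma>2 i}" for i
    have Ui: "measure_pmf.prob \<Omega> (EBi i) \<le> q / real k" if iC: "i \<in> C j" for i
    proof -
      have im: "i < m" using iC Cm by auto
      have bi: "real (b i) \<ge> 1" using b_pos im by simp
      define E1 where "E1 y = {(S,Y1,Z,\<sigma>1,Y2::nat\<Rightarrow>bool,\<sigma>2::nat list). y \<in> snd (pass (\<lambda>y. Y1 y \<and> Z y) C b S \<sigma>1 (\<lambda>_. 0, {})) \<and> i \<in> S y}" for y
      define E2 where "E2 y = {(S,Y1::nat\<Rightarrow>bool,Z::nat\<Rightarrow>bool,\<sigma>1::nat list,Y2,\<sigma>2). y \<in> set (takeWhile (\<lambda>z. z \<noteq> j) \<sigma>2) \<and> Y2 y \<and> i \<in> S y}" for y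
      define V where "V \<omega> = (\<Sum>y<n. indicator (E1 y) \<omega> + indicator (E2 y) \<omega> :: real)" for \<omega>
      have PE1: "measure_pmf.prob \<Omega> (E1 y) = mean_size D i y * (\<beta>1 * x y / real k)" if y: "y < n" for y
      proof -
        define F where "F = {(S,Y1,Z,\<sigma>1,Y2::nat\<Rightarrow>bool,\<sigma>2::nat list). y \<in> snd (pass (\<lambda>y. Y1 y \<and> Z y) C b S \<sigma>1 (\<lambda>_. 0, {}))}"
        have "measure_pmf.prob \<Omega> (E1 y) = measure_pmf.prob (D y) {A. i \<in> A} * measure_pmf.prob \<Omega> F"
          unfolding \<Omega>_eq PS_def
        proof (rule Pi_indep'[where P="\<lambda>A. i \<in> A" and Q="\<lambda>S r. (S,r) \<in> F"])
          fix g yy r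
          assume r: "r \<in> set_pmf (pair_pmf PY1 (pair_pmf PZ (pair_pmf PP (pair_pmf PY2 PP))))"
          obtain Y1 Z \<sigma>1 Y2 \<sigma>2 where rr: "r = (Y1,Z,\<sigma>1,Y2,\<sigma>2)" by (cases r) auto
          have "distinct \<sigma>1" using r unfolding rr by (auto simp: PP_supp dest: permutations_of_setD)
          then show "((g(y := yy), r) \<in> F) = ((g, r) \<in> F)"
            unfolding rr F_def using pass_ign[of \<sigma>1 y "{}" "\<lambda>y. Y1 y \<and> Z y" C b g "\<lambda>_. 0" yy] by simp
        qed (auto simp: y E1_def F_def)
        moreover have "measure_pmf.prob \<Omega> F = \<beta>1 * x y / real k"
        proof -
          have eqF: "{r. y \<in> fst (res C b r)} = F" unfolding F_def res_def by (auto simp: Let_def)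
          have "measure_pmf.prob \<Omega> {r. y \<in> fst (res C b r)} = \<beta>1 * x y / real k"
            using attenuation y unfolding sk by simp
          then show ?thesis unfolding eqF .
        qed
        ultimately show ?thesis unfolding mean_size_def by simp
      qed
      have PE2: "measure_pmf.prob \<Omega> (E2 y) \<le> mean_size D i y * (\<alpha>2 * x y / real k) / 2" if y: "y < n" for y
      proof -
        define F where "F = {(S::nat\<Rightarrow>nat set,Y1::nat\<Rightarrow>bool,Z::nat\<Rightarrow>bool,\<sigma>1::nat list,Y2::nat\<Rightarrow>bool,\<sigma>2::nat list). Y2 y \<and> y \<in> set (takeWhile (\<lambda>z. z \<noteq> j) \<sigma>2)}"
        have "measure_pmf.prob \<Omega> (E2 y) = measure_pmf.prob (D y) {A. i \<in> A} * measure_pmf.prob \<Omega> F"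
          unfolding \<Omega>_eq PS_def
          by (rule Pi_indep'[where P="\<lambda>A. i \<in> A" and Q="\<lambda>S r. (S,r) \<in> F"])
             (auto simp: y E2_def F_def)
        moreover have "measure_pmf.prob \<Omega> F = measure_pmf.prob PY2 {g. g y} *
            measure_pmf.prob PP {\<sigma>. y \<in> set (takeWhile (\<lambda>z. z \<noteq> j) \<sigma>)}"
          unfolding \<Omega>_eq
        proof (rule peel4_const)
          fix a1 a2 a3 a4
          have "{w. (a1,a2,a3,a4,w) \<in> F} = {(g,\<sigma>). g y \<and> y \<in> set (takeWhile (\<lambda>z. z \<noteq> j) \<sigma>)}"
            unfolding F_def by auto
          then show "measure_pmf.prob (pair_pmf PY2 PP) {w. (a1,a2,a3,a4,w) \<in> F} = measure_pmf.prob PY2 {g. g y} *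
            measure_pmf.prob PP {\<sigma>. y \<in> set (takeWhile (\<lambda>z. z \<noteq> j) \<sigma>)}"
            by (simp only: prob_pair_rect)
        qed
        moreover have "measure_pmf.prob PY2 {g. g y} = \<alpha>2 * x y / real k"
        proof -
          have "{yy::bool. yy} = {True}" by auto
          moreover have "\<alpha>2 * x y / real k \<ge> 0" using \<alpha>2_nonneg x_nn[OF y] kpos by simp
          ultimately show ?thesis
            using prob_Pi_comp[of "{..<n}" y False "\<lambda>j. bernoulli_pmf (\<alpha>2 * x j / real k)" "\<lambda>yy. yy"] y Y2_wd
            unfolding PY2_def by (simp add: measure_pmf_single)
        qed
        moreover have "measure_pmf.prob PP {\<sigma>. y \<in> set (takeWhile (\<lambda>z. z \<noteq> j) \<sigma>)} \<le> 1/2"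
          unfolding PP_def using before_half[OF j y] .
        moreover have "mean_size D i y \<ge> 0" unfolding mean_size_def by simp
        moreover have "\<alpha>2 * x y / real k \<ge> 0" using \<alpha>2_nonneg x_nn[OF y] kpos by simp
        ultimately show ?thesis
        proof -
          fix ms a bb :: real
          have gen: "ms \<ge> 0 \<Longrightarrow> a \<ge> 0 \<Longrightarrow> bb \<le> 1/2 \<Longrightarrow> ms * (a * bb) \<le> ms * a / 2" for ms a bb :: real
          proof -
            assume h: "ms \<ge> 0" "a \<ge> 0" "bb \<le> 1/2"
            then have "a * bb \<le> a * (1/2)" by (intro mult_left_mono) auto
            then have "ms * (a * bb) \<le> ms * (a * (1/2))" using h by (intro mult_left_mono) auto
            then show ?thesis by simp
          qed
          assume "measure_pmf.prob \<Omega> (E2 y) = measure_pmf.prob (D y) {A. i \<in> A} * measure_pmf.prob \<Omega> F"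
            "measure_pmf.prob \<Omega> F = measure_pmf.prob PY2 {g. g y} * measure_pmf.prob PP {\<sigma>. y \<in> set (takeWhile (\<lambda>z. z \<noteq> j) \<sigma>)}"
            "measure_pmf.prob PY2 {g. g y} = \<alpha>2 * x y / real k"
            "measure_pmf.prob PP {\<sigma>. y \<in> set (takeWhile (\<lambda>z. z \<noteq> j) \<sigma>)} \<le> 1/2"
            "mean_size D i y \<ge> 0" "\<alpha>2 * x y / real k \<ge> 0"
          then show ?thesis using gen[of "mean_size D i y" "\<alpha>2 * x y / real k"] unfolding mean_size_def by simp
        qed
      qed
      have upV: "real (b i) \<le> V \<omega>" if om: "\<omega> \<in> set_pmf \<Omega>" "\<omega> \<in> EBi i" for \<omega>
      proof -
        obtain S Y1 Z \<sigma>1 Y2 \<sigma>2 where \<omega>: "\<omega> = (S,Y1,Z,\<sigma>1,Y2,\<sigma>2)" by (cases \<omega>) auto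
        have pm: "\<sigma>1 \<in> permutations_of_set {..<n}" "\<sigma>2 \<in> permutations_of_set {..<n}"
          using supp[of S Y1 Z \<sigma>1 Y2 \<sigma>2] om(1) unfolding \<omega> by auto
        have d1: "distinct \<sigma>1" "set \<sigma>1 = {..<n}" "set \<sigma>2 = {..<n}" "distinct \<sigma>2"
          using pm by (auto dest: permutations_of_setD)
        define pre where "pre = takeWhile (\<lambda>z. z \<noteq> j) \<sigma>2"
        have dpre: "distinct pre" unfolding pre_def using d1(4) by (rule distinct_takeWhile)
        have spre: "set pre \<subseteq> {..<n}" unfolding pre_def using d1(3) by (auto dest: set_takeWhileD)
        define A1 where "A1 = snd (pass (\<lambda>y. Y1 y \<and> Z y) C b S \<sigma>1 (\<lambda>_. 0, {}))"
        define u1 where "u1 = fst (pass (\<lambda>y. Y1 y \<and> Z y) C b S \<sigma>1 (\<lambda>_. 0, {}))"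
        define Ap where "Ap = snd (pass (\<lambda>y. \<not> Y1 y \<and> Y2 y) C b S pre (u1, {}))"
        have u1i: "u1 i = card {x \<in> A1. i \<in> S x}"
          using pass_use[OF d1(1), of "{}" "\<lambda>y. Y1 y \<and> Z y" C b S "\<lambda>_. 0" i] unfolding u1_def A1_def by simp
        have upi: "up S Y1 Z \<sigma>1 Y2 \<sigma>2 i = u1 i + card {x \<in> Ap. i \<in> S x}"
          using pass_use[OF dpre, of "{}" "\<lambda>y. \<not> Y1 y \<and> Y2 y" C b S u1 i]
          unfolding up_def Ap_def u1_def pre_def by simp
        have A1sub: "A1 \<subseteq> {..<n}" using pass_sub[of "\<lambda>y. Y1 y \<and> Z y" C b S \<sigma>1 "\<lambda>_. 0" "{}"] d1(2)
          unfolding A1_def by auto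
        have Apsub: "Ap \<subseteq> {y \<in> {..<n}. y \<in> set pre \<and> Y2 y}"
          using pass_sub[of "\<lambda>y. \<not> Y1 y \<and> Y2 y" C b S pre u1 "{}"] spre unfolding Ap_def by auto
        have c1: "card {x \<in> A1. i \<in> S x} = card {y \<in> {..<n}. y \<in> A1 \<and> i \<in> S y}"
          using A1sub by (intro arg_cong[where f=card]) auto
        have c2: "card {x \<in> Ap. i \<in> S x} \<le> card {y \<in> {..<n}. y \<in> set pre \<and> Y2 y \<and> i \<in> S y}"
          using Apsub by (intro card_mono) auto
        have Vw: "V \<omega> = real (card {y \<in> {..<n}. y \<in> A1 \<and> i \<in> S y}) + real (card {y \<in> {..<n}. y \<in> set pre \<and> Y2 y \<and> i \<in> S y})"
          unfolding V_def card_filter_sum[OF finite_lessThan] sum.distrib[symmetric]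
          by (intro sum.cong) (auto simp: \<omega> E1_def E2_def A1_def pre_def indicator_def)
        have "b i \<le> up S Y1 Z \<sigma>1 Y2 \<sigma>2 i" using om(2) unfolding \<omega> EBi_def by simp
        then have "real (b i) \<le> real (up S Y1 Z \<sigma>1 Y2 \<sigma>2 i)" by simp
        also have "\<dots> \<le> V \<omega>" unfolding Vw upi u1i c1 using c2 by simp
        finally show ?thesis .
      qed
      have intV: "integrable \<Omega> V" unfolding V_def by (rule Bochner_Integration.integrable_sum) (auto simp: measure_pmf.emeasure_eq_measure)
      have EV: "(\<integral>\<omega>. V \<omega> \<partial>\<Omega>) = (\<Sum>y<n. measure_pmf.prob \<Omega> (E1 y) + measure_pmf.prob \<Omega> (E2 y))"
        unfolding V_def by (subst Bochner_Integration.integral_sum) (auto simp: measure_pmf.emeasure_eq_measure)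
      have "(\<Sum>y<n. measure_pmf.prob \<Omega> (E1 y) + measure_pmf.prob \<Omega> (E2 y))
          \<le> (\<Sum>y<n. mean_size D i y * x y * (q / real k))"
      proof (rule sum_mono)
        fix y assume "y \<in> {..<n}"
        then have y: "y < n" by simp
        have "measure_pmf.prob \<Omega> (E1 y) + measure_pmf.prob \<Omega> (E2 y)
            \<le> mean_size D i y * (\<beta>1 * x y / real k) + mean_size D i y * (\<alpha>2 * x y / real k) / 2"
          using PE1[OF y] PE2[OF y] by simp
        also have "\<dots> = mean_size D i y * x y * (q / real k)" using kpos unfolding q_def by (simp add: field_simps)
        finally show "measure_pmf.prob \<Omega> (E1 y) + measure_pmf.prob \<Omega> (E2 y) \<le> mean_size D i y * x y * (q / real k)" .
      qed
      also have "\<dots> = (\<Sum>y<n. mean_size D i y * x y) * (q / real k)" by (rule sum_distrib_right[symmetric])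
      also have "\<dots> \<le> real (b i) * (q / real k)"
        using LP[OF im] qnn kpos by (intro mult_right_mono) auto
      finally have EVb: "(\<integral>\<omega>. V \<omega> \<partial>\<Omega>) \<le> real (b i) * (q / real k)" using EV by simp
      have "measure_pmf.prob \<Omega> (EBi i) \<le> measure_pmf.prob \<Omega> {\<omega>. real (b i) \<le> V \<omega>}"
        using upV by (intro prob_mono_set) auto
      also have "\<dots> \<le> (\<integral>\<omega>. V \<omega> \<partial>\<Omega>) / real (b i)"
        using integral_Markov_inequality_measure[OF intV, of UNIV "real (b i)"] bi
        by (simp add: V_def sum_nonneg)
      also have "\<dots> \<le> real (b i) * (q / real k) / real (b i)"
        using EVb bi by (intro divide_right_mono) auto
      also have "\<dots> = q / real k" using bi by simp
      finally show ?thesis .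
    qed
    have PB: "measure_pmf.prob \<Omega> EB \<le> q"
    proof -
      have "EB = (\<Union>i\<in>C j. EBi i)" unfolding EB_def EBi_def by auto
      then have "measure_pmf.prob \<Omega> EB \<le> (\<Sum>i\<in>C j. measure_pmf.prob \<Omega> (EBi i))"
        using finC by (simp add: measure_subadditive_finite measure_pmf.emeasure_eq_measure)
      also have "\<dots> \<le> (\<Sum>i\<in>C j. q / real k)" using Ui by (intro sum_mono) auto
      also have "\<dots> = real (card (C j)) * q / real k" by simp
      also have "\<dots> \<le> real k * q / real k"
        using cardC qnn kpos by (intro divide_right_mono mult_right_mono) auto
      also have "\<dots> = q" using kpos by simp
      finally show ?thesis .
    qed
    have sub: "UNIV - G \<subseteq> EA \<union> EB" unfolding EA_def EB_def G_def by (auto simp: not_less)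
    have "measure_pmf.prob \<Omega> (UNIV - G) \<le> measure_pmf.prob \<Omega> (EA \<union> EB)"
      using sub by (intro measure_pmf.finite_measure_mono) auto
    also have "\<dots> \<le> measure_pmf.prob \<Omega> EA + measure_pmf.prob \<Omega> EB"
      by (intro measure_subadditive) (auto simp: measure_pmf.emeasure_eq_measure)
    finally have "measure_pmf.prob \<Omega> (UNIV - G) \<le> p1 + q" using PA PB by simp
    moreover have "measure_pmf.prob \<Omega> (UNIV - G) = 1 - measure_pmf.prob \<Omega> G"
      using measure_pmf.prob_compl[of G \<Omega>] by simp
    ultimately show ?thesis by simp
  qed
  have "x j / real k * \<alpha>2 * (1 - \<alpha>1 * x j / real k - \<beta>1 - \<alpha>2 / 2) = p2 * (1 - p1 - q)"
    unfolding p1_def p2_def q_def by (simp add: algebra_simps)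
  also have "\<dots> \<le> p2 * measure_pmf.prob \<Omega> G" using s3 p2nn by (intro mult_left_mono)
  also have "\<dots> \<le> measure_pmf.prob (sksp n k C b D x \<alpha>1 \<alpha>2 gam) {r. j \<in> snd r}"
    using s1 s2 by simp
  finally show ?thesis .
qed


end
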